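(* Let $R$ be a commutative ring with unit, $Q=(V,E,X,s,t,l)$ a labelled quiver, and let $f,g,h\in R\langle X\rangle$ be such that $f$ is compatible with $Q$, $g$ is uniformly compatible with $Q$, and $h$ can be obtained from $f$ by a rewriting step using $g$, i.e. $h=f+\lambda agb$ for some $\lambda\in R$ and $a,b\in\langle X\rangle$ with $a m_g b = m_f$ for some $m_g\in\operatorname{supp}(g)$, $m_f\in\operatorname{supp}(f)$. Then $h$ is compatible, $a$, $b$ and $agb$ are uniformly compatible with $Q$, and $\sigma(h)\supseteq\sigma(f)$ and $\sigma(agb)\supseteq\sigma(f)$. Moreover, if in addition $f$ is uniformly compatible, then $h$ is uniformly compatible and $\sigma(agb)=\sigma(f)$.
   Context: $R\langle X\rangle$ is the free algebra of noncommutative polynomials over $R$ in indeterminates $X$, with monomials the words in $\langle X\rangle$ (including the empty word $1$); $\operatorname{supp}(f)$ is the set of monomials with nonzero coefficient. A rewriting step: for $f,g$ such that some $m_g\in\operatorname{supp}(g)$ divides some $m_f\in\operatorname{supp}(f)$, i.e. $m_f=am_gb$ with $a,b\in\langle X\rangle$, and $\lambda\in R$, the polynomial $f+\lambda agb$ is obtained from $f$ by a rewriting step using $g$. A labelled quiver $Q=(V,E,X,s,t,l)$ has vertices $V$, edges $E$, source/target maps $s,t:E\to V$ and labelling $l:E\to X$. A nonempty path $p=e_n\cdots e_1$ (with $s(e_{i+1})=t(e_i)$) has label $l(e_n)\cdots l(e_1)$, source $s(e_1)$, target $t(e_n)$; each vertex $v$ has an empty path with label $1$ and source and target $v$. For a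 monomial $m$, $\sigma(m)=\{(s(p),t(p)) : p \text{ a path with } l(p)=m\}$; for a polynomial $f$, $\sigma(f)=\bigcap_{m\in\operatorname{supp}(f)}\sigma(m)$. $f$ is compatible with $Q$ if $\sigma(f)\neq\emptyset$, and uniformly compatible if it is compatible and all $m\in\operatorname{supp}(f)$ have the same set $\sigma(m)$. *)

theory Defs
  imports Main
begin

text \<open>Noncommutative polynomials over a commutative ring 'r in indeterminates of type 'x
  are represented as finitely supported functions from words ('x list, the empty list being
  the empty word 1) to coefficients.\<close>

definition supp :: "('x list \<Rightarrow> 'r::zero) \<Rightarrow> 'x list set" where
  "supp f = {m. f m \<noteq> 0}"

definition ncpoly :: "('x list \<Rightarrow> 'r::zero) \<Rightarrow> bool" where
  "ncpoly f \<longleftrightarrow> finite (supp f)"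

definition monom_poly :: "'x list \<Rightarrow> 'x list \<Rightarrow> 'r::{zero,one}" where
  "monom_poly m = (\<lambda>w. if w = m then 1 else 0)"

definition lrmul :: "'x list \<Rightarrow> ('x list \<Rightarrow> 'r::comm_ring_1) \<Rightarrow> 'x list \<Rightarrow> 'x list \<Rightarrow> 'r" where
  "lrmul a g b = (\<lambda>w. \<Sum>v\<in>supp g. if a @ v @ b = w then g v else 0)"

text \<open>Labelled quiver (V,E,X,s,t,l): vertices V, edges E, s,t : E \<rightarrow> V, labels l : E \<rightarrow> X
  (X is the type 'x).\<close>
definition quiver :: "'v set \<Rightarrow> 'e set \<Rightarrow> ('e \<Rightarrow> 'v) \<Rightarrow> ('e \<Rightarrow> 'v) \<Rightarrow> bool" where
  "quiver V E s t \<longleftrightarrow> (\<forall>e\<in>E. s e \<in> V \<and> t e \<in> V)"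

text \<open>A nonempty path e_n \<cdots> e_1 is the list [e_n, ..., e_1]; consecutive condition
  s(e_{i+1}) = t(e_i). Its label is map l p, source s(e_1) = s (last p), target t(e_n) = t (hd p).\<close>
definition ne_path :: "'e set \<Rightarrow> ('e \<Rightarrow> 'v) \<Rightarrow> ('e \<Rightarrow> 'v) \<Rightarrow> 'e list \<Rightarrow> bool" where
  "ne_path E s t p \<longleftrightarrow> p \<noteq> [] \<and> set p \<subseteq> E \<and>
     (\<forall>i. Suc i < length p \<longrightarrow> s (p ! i) = t (p ! Suc i))"

definition sigma_mon :: "'v set \<Rightarrow> 'e set \<Rightarrow> ('e \<Rightarrow> 'v) \<Rightarrow> ('e \<Rightarrow> 'v) \<Rightarrow> ('e \<Rightarrow> 'x)
    \<Rightarrow> 'x list \<Rightarrow> ('v \<times> 'v) set" where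
  "sigma_mon V E s t l m =
     {(v, v) | v. v \<in> V \<and> m = []} \<union>
     {(s (last p), t (hd p)) | p. ne_path E s t p \<and> map l p = m}"

definition sigma_poly :: "'v set \<Rightarrow> 'e set \<Rightarrow> ('e \<Rightarrow> 'v) \<Rightarrow> ('e \<Rightarrow> 'v) \<Rightarrow> ('e \<Rightarrow> 'x)
    \<Rightarrow> ('x list \<Rightarrow> 'r::zero) \<Rightarrow> ('v \<times> 'v) set" where
  "sigma_poly V E s t l f = (\<Inter>m\<in>supp f. sigma_mon V E s t l m)"

definition compatible where
  "compatible V E s t l f \<longleftrightarrow> sigma_poly V E s t l f \<noteq> {}"

definition unif_compatible where
  "unif_compatible V E s t l f \<longleftrightarrow> compatible V E s t l f \<and>
     (\<forall>m\<in>supp f. \<forall>m'\<in>supp f. sigma_mon V E s t l m = sigma_mon V E s t l m')"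

end

theory Submission
  imports Defs
begin

lemma ne_path_Cons:
  "ne_path E s t (e#p) \<longleftrightarrow> e \<in> E \<and> (p \<noteq> [] \<longrightarrow> s e = t (hd p) \<and> ne_path E s t p)"
proof
  assume A: "ne_path E s t (e#p)"
  then have "e \<in> E" "set p \<subseteq> E" by (auto simp: ne_path_def)
  moreover have "\<And>i. Suc i < length p \<Longrightarrow> s (p ! i) = t (p ! Suc i)"
    using A unfolding ne_path_def by (metis Suc_less_eq length_Cons nth_Cons_Suc)
  moreover have "p \<noteq> [] \<Longrightarrow> s e = t (hd p)"
    using A unfolding ne_path_def by (metis hd_conv_nth length_Cons length_greater_0_conv
        nth_Cons_0 nth_Cons_Suc Suc_less_eq)
  ultimately show "e \<in> E \<and> (p \<noteq> [] \<longrightarrow> s e = t (hd p) \<and> ne_path E s t p)"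
    by (auto simp: ne_path_def)
next
  assume B: "e \<in> E \<and> (p \<noteq> [] \<longrightarrow> s e = t (hd p) \<and> ne_path E s t p)"
  show "ne_path E s t (e#p)"
    unfolding ne_path_def
  proof (intro conjI allI impI)
    show "set (e#p) \<subseteq> E" using B by (cases "p = []") (auto simp: ne_path_def)
  next
    fix i assume i: "Suc i < length (e#p)"
    show "s ((e # p) ! i) = t ((e # p) ! Suc i)"
    proof (cases i)
      case 0 then show ?thesis using B i by (auto simp: hd_conv_nth)
    next
      case (Suc j) then show ?thesis using B i by (auto simp: ne_path_def)
    qed
  qed simp
qed

lemma ne_path_append:
  "p1 \<noteq> [] \<Longrightarrow> p2 \<noteq> [] \<Longrightarrow> ne_path E s t (p1@p2) \<longleftrightarrow>
     ne_path E s t p1 \<and> ne_path E s t p2 \<and> s (last p1) = t (hd p2)"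
proof (induction p1)
  case Nil then show ?case by simp
next
  case (Cons e p1)
  show ?case
  proof (cases "p1 = []")
    case True then show ?thesis using Cons.prems by (auto simp: ne_path_Cons)
  next
    case False then show ?thesis using Cons by (simp add: ne_path_Cons)
  qed
qed

lemma sigma_Nil: "sigma_mon V E s t l [] = {(v,v) | v. v \<in> V}"
  by (auto simp: sigma_mon_def ne_path_def)

lemma sigma_V:
  assumes "quiver V E s t" "(x,y) \<in> sigma_mon V E s t l m"
  shows "x \<in> V \<and> y \<in> V"
proof -
  { fix p assume "ne_path E s t p"
    then have "last p \<in> E" "hd p \<in> E" by (auto simp: ne_path_def)
    then have "s (last p) \<in> V" "t (hd p) \<in> V" using assms(1) by (auto simp: quiver_def) }
  then show ?thesis using assms(2) by (auto simp: sigma_mon_def)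
qed

lemma sigma_path: "ne_path E s t p \<Longrightarrow> (s (last p), t (hd p)) \<in> sigma_mon V E s t l (map l p)"
  unfolding sigma_mon_def by blast

lemma sigma_append:
  assumes q: "quiver V E s t"
  shows "sigma_mon V E s t l (m1@m2) =
    {(x,z). \<exists>y. (y,z) \<in> sigma_mon V E s t l m1 \<and> (x,y) \<in> sigma_mon V E s t l m2}"
proof (cases "m1 = []")
  case True then show ?thesis using sigma_V[OF q] by (auto simp: sigma_Nil)
next
  case F1: False
  show ?thesis
  proof (cases "m2 = []")
    case True then show ?thesis using sigma_V[OF q] by (auto simp: sigma_Nil)
  next
    case F2: False
    have A: "\<exists>y. (y,z) \<in> sigma_mon V E s t l m1 \<and> (x,y) \<in> sigma_mon V E s t l m2"
      if "(x,z) \<in> sigma_mon V E s t l (m1@m2)" for x z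
    proof -
      from that obtain p where p: "ne_path E s t p" "map l p = m1 @ m2" "x = s (last p)" "z = t (hd p)"
        using F1 by (auto simp: sigma_mon_def)
      then obtain p1 p2 where pp: "p = p1 @ p2" "map l p1 = m1" "map l p2 = m2"
        by (auto simp: map_eq_append_conv)
      have ne: "p1 \<noteq> []" "p2 \<noteq> []" using pp F1 F2 by auto
      have np: "ne_path E s t p1" "ne_path E s t p2" "s (last p1) = t (hd p2)"
        using p(1) ne_path_append[OF ne] pp(1) by auto
      have "(s (last p1), z) \<in> sigma_mon V E s t l m1"
        using sigma_path[OF np(1), of V l] pp ne p by simp
      moreover have "(x, s (last p1)) \<in> sigma_mon V E s t l m2"
        using sigma_path[OF np(2), of V l] np(3) pp ne p by simp
      ultimately show "\<exists>y. (y,z) \<in> sigma_mon V E s t l m1 \<and> (x,y) \<in> sigma_mon V E s t l m2"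
        by blast
    qed
    have B: "(x,z) \<in> sigma_mon V E s t l (m1@m2)"
      if "\<exists>y. (y,z) \<in> sigma_mon V E s t l m1 \<and> (x,y) \<in> sigma_mon V E s t l m2" for x z
    proof -
      from that obtain y where y: "(y,z) \<in> sigma_mon V E s t l m1" "(x,y) \<in> sigma_mon V E s t l m2"
        by blast
      from y(1) obtain p1 where p1: "ne_path E s t p1" "map l p1 = m1" "y = s (last p1)" "z = t (hd p1)"
        using F1 by (auto simp: sigma_mon_def)
      from y(2) obtain p2 where p2: "ne_path E s t p2" "map l p2 = m2" "x = s (last p2)" "y = t (hd p2)"
        using F2 by (auto simp: sigma_mon_def)
      have ne: "p1 \<noteq> []" "p2 \<noteq> []" using p1 p2 by (auto simp: ne_path_def)
      have "ne_path E s t (p1 @ p2)" using ne_path_append[OF ne, of E s t] p1 p2 by simp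
      moreover have "map l (p1@p2) = m1 @ m2" using p1 p2 by simp
      ultimately show "(x,z) \<in> sigma_mon V E s t l (m1@m2)"
        using sigma_path[of E s t "p1@p2" V l] p1 p2 ne by simp
    qed
    show ?thesis using A B by blast
  qed
qed

lemma lrmul_at:
  assumes "finite (supp g)"
  shows "lrmul a g b (a@v@b) = (g v :: 'r::comm_ring_1)"
proof -
  have "lrmul a g b (a@v@b) = (\<Sum>v'\<in>supp g. if v' = v then g v' else 0)"
    unfolding lrmul_def by (rule sum.cong) auto
  also have "\<dots> = (if v \<in> supp g then g v else 0)" using assms by simp
  also have "\<dots> = g v" by (auto simp: supp_def)
  finally show ?thesis .
qed

lemma lrmul_other:
  assumes "\<forall>v. w \<noteq> a@v@b"
  shows "lrmul a g b w = (0::'r::comm_ring_1)"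
  unfolding lrmul_def using assms by (intro sum.neutral) auto

lemma supp_lrmul:
  assumes "finite (supp g)"
  shows "supp (lrmul a g b :: _ \<Rightarrow> 'r::comm_ring_1) = (\<lambda>v. a@v@b) ` supp g"
proof (rule set_eqI)
  fix w
  show "w \<in> supp (lrmul a g b) \<longleftrightarrow> w \<in> (\<lambda>v. a@v@b) ` supp g"
  proof (cases "\<exists>v. w = a@v@b")
    case True then obtain v where "w = a@v@b" by blast
    then show ?thesis using lrmul_at[OF assms, where a=a and v=v and b=b] by (auto simp: supp_def)
  next
    case False then show ?thesis using lrmul_other[of w a b g] by (auto simp: supp_def)
  qed
qed

lemma supp_monom: "supp (monom_poly a :: _ \<Rightarrow> 'r::comm_ring_1) = {a}"
  by (auto simp: supp_def monom_poly_def)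

theorem lemma3p10:
  fixes V :: "'v set" and E :: "'e set" and s t :: "'e \<Rightarrow> 'v" and l :: "'e \<Rightarrow> 'x"
    and f g h :: "'x list \<Rightarrow> 'r::comm_ring_1"
    and lam :: 'r and a b mg mf :: "'x list"
  assumes "quiver V E s t"
    and "ncpoly f" and "ncpoly g"
    and "compatible V E s t l f"
    and "unif_compatible V E s t l g"
    and "mg \<in> supp g" and "mf \<in> supp f" and "a @ mg @ b = mf"
    and "h = (\<lambda>w. f w + lam * lrmul a g b w)"
  shows "compatible V E s t l h
      \<and> unif_compatible V E s t l (monom_poly a :: 'x list \<Rightarrow> 'r)
      \<and> unif_compatible V E s t l (monom_poly b :: 'x list \<Rightarrow> 'r)
      \<and> unif_compatible V E s t l (lrmul a g b)
      \<and> sigma_poly V E s t l f \<subseteq> sigma_poly V E s t l h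
      \<and> sigma_poly V E s t l f \<subseteq> sigma_poly V E s t l (lrmul a g b)
      \<and> (unif_compatible V E s t l f \<longrightarrow>
           unif_compatible V E s t l h
           \<and> sigma_poly V E s t l (lrmul a g b) = sigma_poly V E s t l f)"
proof -
  note q = assms(1)
  let ?S = "sigma_mon V E s t l"
  let ?L = "lrmul a g b :: 'x list \<Rightarrow> 'r"
  have fg: "finite (supp g)" using assms(3) by (simp add: ncpoly_def)
  have gu: "\<And>v. v \<in> supp g \<Longrightarrow> ?S v = ?S mg"
    using assms(5,6) unfolding unif_compatible_def by blast
  have Sav: "\<And>v. v \<in> supp g \<Longrightarrow> ?S (a@v@b) = ?S mf"
  proof -
    fix v assume v: "v \<in> supp g"
    have "?S (a@v@b) = ?S (a@mg@b)" by (simp only: sigma_append[OF q] gu[OF v])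
    then show "?S (a@v@b) = ?S mf" using assms(8) by simp
  qed
  have sL: "supp ?L = (\<lambda>v. a@v@b) ` supp g" by (rule supp_lrmul[OF fg])
  have sigL: "sigma_poly V E s t l ?L = ?S mf"
  proof -
    have "?S ` (\<lambda>v. a@v@b) ` supp g = {?S mf}"
    proof
      show "?S ` (\<lambda>v. a@v@b) ` supp g \<subseteq> {?S mf}" using Sav by blast
      show "{?S mf} \<subseteq> ?S ` (\<lambda>v. a@v@b) ` supp g" using Sav[OF assms(6)] assms(6) by blast
    qed
    then show ?thesis unfolding sigma_poly_def sL by simp
  qed
  have fsub: "sigma_poly V E s t l f \<subseteq> ?S mf"
    unfolding sigma_poly_def using assms(7) by auto
  have fne: "sigma_poly V E s t l f \<noteq> {}" using assms(4) by (simp add: compatible_def)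
  have mfne: "?S mf \<noteq> {}" using fsub fne by blast
  then obtain x z where xz: "(x,z) \<in> ?S (a @ (mg @ b))" using assms(8) by auto
  then have "\<exists>y. (y,z) \<in> ?S a \<and> (\<exists>y'. (y',y) \<in> ?S mg \<and> (x,y') \<in> ?S b)"
    by (simp only: sigma_append[OF q] mem_Collect_eq case_prod_conv)
  then obtain y y' where "(y,z) \<in> ?S a" "(x,y') \<in> ?S b" by blast
  then have ane: "?S a \<noteq> {}" and bne: "?S b \<noteq> {}" by auto
  have ua: "unif_compatible V E s t l (monom_poly a :: 'x list \<Rightarrow> 'r)"
    using ane by (simp add: unif_compatible_def compatible_def sigma_poly_def supp_monom)
  have ub: "unif_compatible V E s t l (monom_poly b :: 'x list \<Rightarrow> 'r)"
    using bne by (simp add: unif_compatible_def compatible_def sigma_poly_def supp_monom)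
  have uL: "unif_compatible V E s t l ?L"
    unfolding unif_compatible_def compatible_def
  proof (intro conjI ballI)
    show "sigma_poly V E s t l ?L \<noteq> {}" using mfne sigL by simp
    fix m m' assume "m \<in> supp ?L" "m' \<in> supp ?L"
    then obtain v v' where vv: "v \<in> supp g" "v' \<in> supp g" "m = a@v@b" "m' = a@v'@b"
      unfolding sL by blast
    have "?S m = ?S mf" using Sav[OF vv(1)] vv(3) by simp
    moreover have "?S m' = ?S mf" using Sav[OF vv(2)] vv(4) by simp
    ultimately show "?S m = ?S m'" by simp
  qed
  have sh: "supp h \<subseteq> supp f \<union> supp ?L"
    using assms(9) by (auto simp: supp_def)
  have hsub: "sigma_poly V E s t l f \<subseteq> sigma_poly V E s t l h"
  proof
    fix p assume p: "p \<in> sigma_poly V E s t l f"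
    have "p \<in> sigma_poly V E s t l ?L" using p fsub sigL by auto
    then show "p \<in> sigma_poly V E s t l h"
      using p sh unfolding sigma_poly_def by blast
  qed
  have ch: "compatible V E s t l h" using hsub fne by (auto simp: compatible_def)
  have last: "unif_compatible V E s t l f \<longrightarrow>
           unif_compatible V E s t l h \<and> sigma_poly V E s t l ?L = sigma_poly V E s t l f"
  proof
    assume uf: "unif_compatible V E s t l f"
    have fu: "\<And>m. m \<in> supp f \<Longrightarrow> ?S m = ?S mf"
      using uf assms(7) unfolding unif_compatible_def by blast
    have sf: "sigma_poly V E s t l f = ?S mf"
    proof -
      have "?S ` supp f = {?S mf}" using fu assms(7) by blast
      then show ?thesis unfolding sigma_poly_def by simp
    qed
    have hu: "\<And>m. m \<in> supp h \<Longrightarrow> ?S m = ?S mf"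
    proof -
      fix m assume "m \<in> supp h"
      then have "m \<in> supp f \<or> m \<in> (\<lambda>v. a@v@b) ` supp g" using sh sL by blast
      then show "?S m = ?S mf" using fu Sav by blast
    qed
    show "unif_compatible V E s t l h \<and> sigma_poly V E s t l ?L = sigma_poly V E s t l f"
      unfolding unif_compatible_def using ch hu sf sigL by metis
  qed
  show ?thesis using ch ua ub uL hsub fsub sigL last by simp
qed

end
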